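(* Let $G=(V,E)$ be a tree, let $S_0=\{r\}$, let $u\in V\setminus\{r\}$, and let $\tau$ be the first round after which $u$ is informed. Let $p_{r,u}$ be the set of nodes on the unique path from $r$ to $u$ (including $r$ and $u$) and $D_{p_{r,u}}=\sum_{w\in p_{r,u}} d_w$, where $d_w$ is the degree of $w$. Then: (1) for \textsc{Pull}, $\mathbb{E}[\tau]=\Theta(D_{p_{r,u}}-d_r)$; (2) for every type of \textsc{RPull} (adversarial or random), $\mathbb{E}[\tau]=\Omega(D_{p_{r,u}}-d_r)$; (3) for adversarial \textsc{RPull}, $\mathbb{E}[\tau]=O(D_{p_{r,u}})$.
   Context: Rumor spreading proceeds in synchronous rounds. \textsc{Pull}: in each round, every uninformed node contacts a uniformly random neighbor and learns the rumor if that neighbor is informed (an informed node may serve arbitrarily many requests). \textsc{RPull}: in each round, every uninformed node sends a request to a uniformly random neighbor; every informed node $v$ receiving a nonempty set $R_v$ of requests selects exactly one node of $R_v$, which learns the rumor. In adversarial \textsc{RPull} the selected node is chosen by an adaptive adversary; in random \textsc{RPull} it is chosen uniformly at random, independently. *)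

theory Defs
  imports "HOL-Probability.Probability"
begin

definition simple_graph :: "'a set \<Rightarrow> ('a \<Rightarrow> 'a \<Rightarrow> bool) \<Rightarrow> bool" where
  "simple_graph V E \<longleftrightarrow> finite V \<and> (\<forall>x y. E x y \<longrightarrow> x \<in> V \<and> y \<in> V)
      \<and> (\<forall>x y. E x y \<longrightarrow> E y x) \<and> (\<forall>x. \<not> E x x)"

definition nbrs :: "('a \<Rightarrow> 'a \<Rightarrow> bool) \<Rightarrow> 'a \<Rightarrow> 'a set" where
  "nbrs E v = {w. E v w}"

definition deg :: "('a \<Rightarrow> 'a \<Rightarrow> bool) \<Rightarrow> 'a \<Rightarrow> nat" where
  "deg E v = card (nbrs E v)"

definition is_path :: "('a \<Rightarrow> 'a \<Rightarrow> bool) \<Rightarrow> 'a list \<Rightarrow> bool" where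
  "is_path E xs \<longleftrightarrow> xs \<noteq> [] \<and> distinct xs \<and> successively E xs"

definition is_cycle :: "('a \<Rightarrow> 'a \<Rightarrow> bool) \<Rightarrow> 'a list \<Rightarrow> bool" where
  "is_cycle E xs \<longleftrightarrow> length xs \<ge> 3 \<and> distinct xs \<and> successively E xs \<and> E (last xs) (hd xs)"

definition connected_graph :: "'a set \<Rightarrow> ('a \<Rightarrow> 'a \<Rightarrow> bool) \<Rightarrow> bool" where
  "connected_graph V E \<longleftrightarrow> (\<forall>x\<in>V. \<forall>y\<in>V. \<exists>xs. is_path E xs \<and> hd xs = x \<and> last xs = y)"

definition is_tree :: "'a set \<Rightarrow> ('a \<Rightarrow> 'a \<Rightarrow> bool) \<Rightarrow> bool" where
  "is_tree V E \<longleftrightarrow> simple_graph V E \<and> V \<noteq> {} \<and> connected_graph V E \<and> \<not> (\<exists>xs. is_cycle E xs)"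

text \<open>The set of nodes on the (unique, in a tree) path from r to u, including r and u.\<close>
definition path_nodes :: "('a \<Rightarrow> 'a \<Rightarrow> bool) \<Rightarrow> 'a \<Rightarrow> 'a \<Rightarrow> 'a set" where
  "path_nodes E r u = set (THE xs. is_path E xs \<and> hd xs = r \<and> last xs = u)"

definition path_degree_sum :: "('a \<Rightarrow> 'a \<Rightarrow> bool) \<Rightarrow> 'a \<Rightarrow> 'a \<Rightarrow> nat" where
  "path_degree_sum E r u = (\<Sum>w\<in>path_nodes E r u. deg E w)"

text \<open>A history records, for each completed round, the request function of that round
  (c w = neighbour contacted by the uninformed node w) and the informed set after the round.\<close>
type_synonym 'a hist = "(('a \<Rightarrow> 'a) \<times> 'a set) list"

definition informed_at :: "'a \<Rightarrow> 'a hist \<Rightarrow> nat \<Rightarrow> 'a set" where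
  "informed_at r hs i = (if i = 0 then {r} else snd (hs ! (i - 1)))"

definition current :: "'a \<Rightarrow> 'a hist \<Rightarrow> 'a set" where
  "current r hs = informed_at r hs (length hs)"

text \<open>Each uninformed node independently contacts a uniformly random neighbour.
  (Values outside V - S are an irrelevant default.)\<close>
definition requests :: "'a set \<Rightarrow> ('a \<Rightarrow> 'a \<Rightarrow> bool) \<Rightarrow> 'a set \<Rightarrow> ('a \<Rightarrow> 'a) pmf" where
  "requests V E S = Pi_pmf (V - S) undefined (\<lambda>w. pmf_of_set (nbrs E w))"

definition req_set :: "'a set \<Rightarrow> 'a set \<Rightarrow> ('a \<Rightarrow> 'a) \<Rightarrow> 'a \<Rightarrow> 'a set" where
  "req_set V S c v = {w \<in> V - S. c w = v}"

text \<open>Distribution of the histories of the first t rounds, for a kernel giving the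
  outcome of the next round as a function of the full history.\<close>
fun traj :: "('h list \<Rightarrow> 'h pmf) \<Rightarrow> nat \<Rightarrow> 'h list pmf" where
  "traj K 0 = return_pmf []"
| "traj K (Suc t) = bind_pmf (traj K t) (\<lambda>hs. map_pmf (\<lambda>x. hs @ [x]) (K hs))"

definition pull_kernel :: "'a set \<Rightarrow> ('a \<Rightarrow> 'a \<Rightarrow> bool) \<Rightarrow> 'a \<Rightarrow> 'a hist \<Rightarrow> (('a \<Rightarrow> 'a) \<times> 'a set) pmf" where
  "pull_kernel V E r hs = (let S = current r hs in
     map_pmf (\<lambda>c. (c, S \<union> {w \<in> V - S. c w \<in> S})) (requests V E S))"

definition rpull_random_kernel :: "'a set \<Rightarrow> ('a \<Rightarrow> 'a \<Rightarrow> bool) \<Rightarrow> 'a \<Rightarrow> 'a hist \<Rightarrow> (('a \<Rightarrow> 'a) \<times> 'a set) pmf" where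
  "rpull_random_kernel V E r hs = (let S = current r hs in
     bind_pmf (requests V E S) (\<lambda>c.
       let A = {v \<in> S. req_set V S c v \<noteq> {}} in
       map_pmf (\<lambda>sel. (c, S \<union> sel ` A)) (Pi_pmf A undefined (\<lambda>v. pmf_of_set (req_set V S c v)))))"

text \<open>Adaptive adversary: a deterministic strategy which, knowing the whole history
  and the current requests c, names for every informed v the node adv hs c v it serves.\<close>
type_synonym 'a adversary = "'a hist \<Rightarrow> ('a \<Rightarrow> 'a) \<Rightarrow> 'a \<Rightarrow> 'a"

definition valid_adversary :: "'a set \<Rightarrow> 'a \<Rightarrow> 'a adversary \<Rightarrow> bool" where
  "valid_adversary V r adv \<longleftrightarrow> (\<forall>hs c v. v \<in> current r hs \<and> req_set V (current r hs) c v \<noteq> {}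
      \<longrightarrow> adv hs c v \<in> req_set V (current r hs) c v)"

definition rpull_adv_kernel :: "'a set \<Rightarrow> ('a \<Rightarrow> 'a \<Rightarrow> bool) \<Rightarrow> 'a \<Rightarrow> 'a adversary \<Rightarrow> 'a hist \<Rightarrow> (('a \<Rightarrow> 'a) \<times> 'a set) pmf" where
  "rpull_adv_kernel V E r adv hs = (let S = current r hs in
     map_pmf (\<lambda>c. (c, S \<union> adv hs c ` {v \<in> S. req_set V S c v \<noteq> {}})) (requests V E S))"

text \<open>Expected first round tau after which u is informed, via the tail-sum formula
  E[tau] = sum_{t>=0} P(tau > t), where tau > t iff u is not informed after any of
  rounds 0..t. (Equals infinity if tau is infinite with positive probability.)\<close>
definition expected_inform_time :: "'a \<Rightarrow> ('a hist \<Rightarrow> (('a \<Rightarrow> 'a) \<times> 'a set) pmf) \<Rightarrow> 'a \<Rightarrow> ennreal" where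
  "expected_inform_time r K u =
     (\<Sum>t. ennreal (measure_pmf.prob (traj K t) {hs. \<forall>i\<le>t. u \<notin> informed_at r hs i}))"

end

theory Submission
  imports Defs
begin


lemma traj_len: "hs \<in> set_pmf (traj K t) \<Longrightarrow> length hs = t"
  by (induction t arbitrary: hs) auto

lemma traj_inv:
  assumes "Inv []" "\<And>hs x. Inv hs \<Longrightarrow> x \<in> set_pmf (K hs) \<Longrightarrow> Inv (hs@[x])"
  shows "hs \<in> set_pmf (traj K t) \<Longrightarrow> Inv hs"
  using assms by (induction t arbitrary: hs) auto

lemma traj_step_eq:
  "(\<integral>\<^sup>+hs. \<Phi> hs \<partial>traj K (Suc T)) + emeasure (traj K T) {hs. Q hs}
     = (\<integral>\<^sup>+hs. (\<integral>\<^sup>+x. \<Phi> (hs@[x]) \<partial>K hs) + indicator {hs. Q hs} hs \<partial>traj K T)"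
  by (simp add: nn_integral_add)

lemma traj_upper:
  fixes K :: "'h list \<Rightarrow> 'h pmf" and \<Phi> :: "'h list \<Rightarrow> ennreal"
  assumes I0: "Inv []" and IS: "\<And>hs x. Inv hs \<Longrightarrow> x \<in> set_pmf (K hs) \<Longrightarrow> Inv (hs@[x])"
    and step: "\<And>hs. Inv hs \<Longrightarrow> (\<integral>\<^sup>+x. \<Phi> (hs@[x]) \<partial>K hs) + indicator {hs. Q hs} hs \<le> \<Phi> hs"
  shows "(\<integral>\<^sup>+hs. \<Phi> hs \<partial>traj K T) + (\<Sum>t<T. emeasure (traj K t) {hs. Q hs}) \<le> \<Phi> []"
proof (induction T)
  case 0
  then show ?case by simp
next
  case (Suc T)
  have "(\<integral>\<^sup>+hs. \<Phi> hs \<partial>traj K (Suc T)) + emeasure (traj K T) {hs. Q hs}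
     = (\<integral>\<^sup>+hs. (\<integral>\<^sup>+x. \<Phi> (hs@[x]) \<partial>K hs) + indicator {hs. Q hs} hs \<partial>traj K T)"
    by (rule traj_step_eq)
  also have "\<dots> \<le> (\<integral>\<^sup>+hs. \<Phi> hs \<partial>traj K T)"
    by (rule nn_integral_mono_AE, rule AE_pmfI) (use step traj_inv[of Inv K, OF I0 IS] in blast)
  finally have A: "(\<integral>\<^sup>+hs. \<Phi> hs \<partial>traj K (Suc T)) + emeasure (traj K T) {hs. Q hs} \<le> (\<integral>\<^sup>+hs. \<Phi> hs \<partial>traj K T)" .
  have "(\<integral>\<^sup>+hs. \<Phi> hs \<partial>traj K (Suc T)) + (\<Sum>t<Suc T. emeasure (traj K t) {hs. Q hs})
     = ((\<integral>\<^sup>+hs. \<Phi> hs \<partial>traj K (Suc T)) + emeasure (traj K T) {hs. Q hs}) + (\<Sum>t<T. emeasure (traj K t) {hs. Q hs})"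
    by (simp only: sum.lessThan_Suc ac_simps)
  also have "\<dots> \<le> (\<integral>\<^sup>+hs. \<Phi> hs \<partial>traj K T) + (\<Sum>t<T. emeasure (traj K t) {hs. Q hs})"
    using A by (rule add_right_mono)
  also have "\<dots> \<le> \<Phi> []" using Suc .
  finally show ?case .
qed

lemma traj_lower:
  fixes K :: "'h list \<Rightarrow> 'h pmf" and \<Phi> :: "'h list \<Rightarrow> ennreal"
  assumes I0: "Inv []" and IS: "\<And>hs x. Inv hs \<Longrightarrow> x \<in> set_pmf (K hs) \<Longrightarrow> Inv (hs@[x])"
    and step: "\<And>hs. Inv hs \<Longrightarrow> \<Phi> hs \<le> (\<integral>\<^sup>+x. \<Phi> (hs@[x]) \<partial>K hs) + indicator {hs. Q hs} hs"
  shows "\<Phi> [] \<le> (\<integral>\<^sup>+hs. \<Phi> hs \<partial>traj K T) + (\<Sum>t<T. emeasure (traj K t) {hs. Q hs})"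
proof (induction T)
  case 0
  then show ?case by simp
next
  case (Suc T)
  have "(\<integral>\<^sup>+hs. \<Phi> hs \<partial>traj K T) \<le> (\<integral>\<^sup>+hs. (\<integral>\<^sup>+x. \<Phi> (hs@[x]) \<partial>K hs) + indicator {hs. Q hs} hs \<partial>traj K T)"
    by (rule nn_integral_mono_AE, rule AE_pmfI) (use step traj_inv[of Inv K, OF I0 IS] in blast)
  also have "\<dots> = (\<integral>\<^sup>+hs. \<Phi> hs \<partial>traj K (Suc T)) + emeasure (traj K T) {hs. Q hs}"
    by (rule traj_step_eq[symmetric])
  finally have A: "(\<integral>\<^sup>+hs. \<Phi> hs \<partial>traj K T) \<le> (\<integral>\<^sup>+hs. \<Phi> hs \<partial>traj K (Suc T)) + emeasure (traj K T) {hs. Q hs}" .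
  have "\<Phi> [] \<le> (\<integral>\<^sup>+hs. \<Phi> hs \<partial>traj K T) + (\<Sum>t<T. emeasure (traj K t) {hs. Q hs})" using Suc .
  also have "\<dots> \<le> ((\<integral>\<^sup>+hs. \<Phi> hs \<partial>traj K (Suc T)) + emeasure (traj K T) {hs. Q hs}) + (\<Sum>t<T. emeasure (traj K t) {hs. Q hs})"
    using A by (rule add_right_mono)
  also have "\<dots> = (\<integral>\<^sup>+hs. \<Phi> hs \<partial>traj K (Suc T)) + (\<Sum>t<Suc T. emeasure (traj K t) {hs. Q hs})"
    by (simp only: sum.lessThan_Suc ac_simps)
  finally show ?case .
qed

lemma traj_decr:
  assumes I0: "Inv []" and IS: "\<And>hs x. Inv hs \<Longrightarrow> x \<in> set_pmf (K hs) \<Longrightarrow> Inv (hs@[x])"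
    and anti: "\<And>hs x. Inv hs \<Longrightarrow> x \<in> set_pmf (K hs) \<Longrightarrow> Q (hs@[x]) \<Longrightarrow> Q hs"
  shows "emeasure (traj K (Suc t)) {hs. Q hs} \<le> emeasure (traj K t) {hs. Q hs}"
proof -
  have "emeasure (traj K (Suc t)) {hs. Q hs} = (\<integral>\<^sup>+hs. emeasure (K hs) {x. Q (hs@[x])} \<partial>traj K t)"
    by (simp add: vimage_def)
  also have "\<dots> \<le> (\<integral>\<^sup>+hs. indicator {hs. Q hs} hs \<partial>traj K t)"
  proof (rule nn_integral_mono_AE, rule AE_pmfI)
    fix hs assume "hs \<in> set_pmf (traj K t)"
    hence iv: "Inv hs" using traj_inv[of Inv K, OF I0 IS] by blast
    show "emeasure (K hs) {x. Q (hs@[x])} \<le> indicator {hs. Q hs} hs"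
    proof (cases "Q hs")
      case True
      then show ?thesis by (simp add: measure_pmf.emeasure_le_1)
    next
      case False
      hence "set_pmf (K hs) \<inter> {x. Q (hs@[x])} = {}" using anti[OF iv] by blast
      hence "measure (K hs) {x. Q (hs@[x])} = 0" by (simp add: measure_pmf_zero_iff)
      then show ?thesis using False by (simp add: measure_pmf.emeasure_eq_measure)
    qed
  qed
  also have "\<dots> = emeasure (traj K t) {hs. Q hs}" by simp
  finally show ?thesis .
qed

lemma traj_lower2:
  fixes K :: "'h list \<Rightarrow> 'h pmf" and \<Phi> :: "'h list \<Rightarrow> ennreal"
  assumes I0: "Inv []" and IS: "\<And>hs x. Inv hs \<Longrightarrow> x \<in> set_pmf (K hs) \<Longrightarrow> Inv (hs@[x])"
    and step: "\<And>hs. Inv hs \<Longrightarrow> \<Phi> hs \<le> (\<integral>\<^sup>+x. \<Phi> (hs@[x]) \<partial>K hs) + indicator {hs. Q hs} hs"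
    and bound: "\<And>hs. Inv hs \<Longrightarrow> \<Phi> hs \<le> of_nat M * indicator {hs. Q hs} hs"
    and anti: "\<And>hs x. Inv hs \<Longrightarrow> x \<in> set_pmf (K hs) \<Longrightarrow> Q (hs@[x]) \<Longrightarrow> Q hs"
  shows "\<Phi> [] \<le> 2 * (\<Sum>t. emeasure (traj K t) {hs. Q hs})"
proof -
  let ?P = "\<lambda>t. emeasure (traj K t) {hs. Q hs}"
  have dec: "decseq ?P" by (rule decseq_SucI, rule traj_decr[OF I0 IS anti]) auto
  have "\<Phi> [] \<le> (\<integral>\<^sup>+hs. \<Phi> hs \<partial>traj K M) + (\<Sum>t<M. ?P t)"
    by (rule traj_lower[OF I0 IS step])
  also have "(\<integral>\<^sup>+hs. \<Phi> hs \<partial>traj K M) \<le> (\<integral>\<^sup>+hs. of_nat M * indicator {hs. Q hs} hs \<partial>traj K M)"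
    by (rule nn_integral_mono_AE, rule AE_pmfI) (use bound traj_inv[of Inv K, OF I0 IS] in blast)
  also have "\<dots> = of_nat M * ?P M" by (simp add: nn_integral_cmult_indicator)
  also have "\<dots> = (\<Sum>t<M. ?P M)" by simp
  also have "\<dots> \<le> (\<Sum>t<M. ?P t)" by (rule sum_mono) (use dec in \<open>auto simp: decseq_def\<close>)
  also have "(\<Sum>t<M. ?P t) + (\<Sum>t<M. ?P t) = 2 * (\<Sum>t<M. ?P t)" by (simp add: mult_2)
  also have "\<dots> \<le> 2 * (\<Sum>t. ?P t)" by (intro mult_left_mono sum_le_suminf) auto
  finally show ?thesis by (simp add: add_right_mono)
qed

lemma traj_upper2:
  fixes K :: "'h list \<Rightarrow> 'h pmf" and \<Phi> :: "'h list \<Rightarrow> ennreal"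
  assumes I0: "Inv []" and IS: "\<And>hs x. Inv hs \<Longrightarrow> x \<in> set_pmf (K hs) \<Longrightarrow> Inv (hs@[x])"
    and step: "\<And>hs. Inv hs \<Longrightarrow> (\<integral>\<^sup>+x. \<Phi> (hs@[x]) \<partial>K hs) + indicator {hs. Q hs} hs \<le> \<Phi> hs"
  shows "(\<Sum>t. emeasure (traj K t) {hs. Q hs}) \<le> \<Phi> []"
proof (rule suminf_le_const)
  fix n
  have "(\<Sum>t<n. emeasure (traj K t) {hs. Q hs}) \<le> (\<integral>\<^sup>+hs. \<Phi> hs \<partial>traj K n) + (\<Sum>t<n. emeasure (traj K t) {hs. Q hs})"
    by simp
  also have "\<dots> \<le> \<Phi> []" by (rule traj_upper[OF I0 IS step])
  finally show "(\<Sum>t<n. emeasure (traj K t) {hs. Q hs}) \<le> \<Phi> []" .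
qed simp

lemma eit_eq:
  "expected_inform_time r K u = (\<Sum>t. emeasure (traj K t) {hs. \<forall>i\<le>length hs. u \<notin> informed_at r hs i})"
  unfolding expected_inform_time_def
proof (rule suminf_cong)
  fix t
  have "emeasure (traj K t) {hs. \<forall>i\<le>t. u \<notin> informed_at r hs i} = (\<integral>\<^sup>+hs. indicator {hs. \<forall>i\<le>t. u \<notin> informed_at r hs i} hs \<partial>traj K t)"
    by simp
  also have "\<dots> = (\<integral>\<^sup>+hs. indicator {hs. \<forall>i\<le>length hs. u \<notin> informed_at r hs i} hs \<partial>traj K t)"
    by (rule nn_integral_cong_AE, rule AE_pmfI) (drule traj_len, simp add: indicator_def)
  also have "\<dots> = emeasure (traj K t) {hs. \<forall>i\<le>length hs. u \<notin> informed_at r hs i}" by simp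
  finally show "ennreal (measure_pmf.prob (traj K t) {hs. \<forall>i\<le>t. u \<notin> informed_at r hs i}) = emeasure (traj K t) {hs. \<forall>i\<le>length hs. u \<notin> informed_at r hs i}"
    by (simp add: measure_pmf.emeasure_eq_measure)
qed



lemma distinct_hd_last: "distinct ys \<Longrightarrow> ys \<noteq> [] \<Longrightarrow> hd ys = last ys \<Longrightarrow> ys = [hd ys]"
  by (cases ys) (auto split: if_splits)

lemma path_unique:
  assumes sym: "\<And>x y. E x y \<Longrightarrow> E y x" and nocyc: "\<not>(\<exists>xs. is_cycle E xs)"
  shows "is_path E xs \<Longrightarrow> is_path E ys \<Longrightarrow> hd xs = hd ys \<Longrightarrow> last xs = last ys \<Longrightarrow> xs = ys"
proof (induction xs arbitrary: ys)
  case Nil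
  then show ?case by (simp add: is_path_def)
next
  case (Cons a xs)
  show ?case
  proof (cases xs)
    case Nil
    with Cons.prems have "hd ys = last ys" "distinct ys" "ys \<noteq> []" by (auto simp: is_path_def)
    from distinct_hd_last[OF this(2,3,1)] Cons.prems Nil show ?thesis by simp
  next
    case (Cons x xs')
    note xs = this
    from Cons.prems(1) xs have dx: "distinct (a#x#xs')" and sx: "successively E (a#x#xs')"
      by (auto simp: is_path_def)
    have lastx: "last (a#xs) = last (x#xs')" using xs by simp
    obtain ys0 where ys0: "ys = a # ys0" using Cons.prems(2,3) by (cases ys) (auto simp: is_path_def)
    show ?thesis
    proof (cases ys0)
      case Nil
      with ys0 Cons.prems(4) lastx have "last (x#xs') = a" by simp
      hence "a \<in> set (x#xs')" by (metis last_in_set list.distinct(1))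
      with dx show ?thesis by simp
    next
      case (Cons y ys')
      note ys0c = this
      from Cons.prems(2) ys0 ys0c have dy: "distinct (a#y#ys')" and sy: "successively E (a#y#ys')"
        by (auto simp: is_path_def)
      show ?thesis
      proof (cases "x = y")
        case True
        have "x#xs' = y#ys'"
        proof (rule Cons.IH[unfolded xs])
          show "is_path E (x # xs')" using dx sx by (simp add: is_path_def)
          show "is_path E (y # ys')" using dy sy by (simp add: is_path_def)
          show "hd (x # xs') = hd (y # ys')" using True by simp
          show "last (x # xs') = last (y # ys')" using Cons.prems(4) xs ys0 ys0c by simp
        qed
        then show ?thesis using xs ys0 ys0c by simp
      next
        case False
        show ?thesis
        proof (cases "x \<in> set ys'")
          case True
          then obtain zs1 zs2 where sp: "ys' = zs1 @ x # zs2" by (meson split_list)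
          have "is_cycle E (a # y # zs1 @ [x])"
            unfolding is_cycle_def
          proof (intro conjI)
            show "3 \<le> length (a # y # zs1 @ [x])" by simp
            show "distinct (a # y # zs1 @ [x])" using dy sp by auto
            have "successively E ((a # y # zs1 @ [x]) @ zs2)" using sy sp by simp
            thus "successively E (a # y # zs1 @ [x])" by (simp only: successively_append_iff)
            show "E (last (a # y # zs1 @ [x])) (hd (a # y # zs1 @ [x]))" using sx sym by simp
          qed
          with nocyc show ?thesis by blast
        next
          case False
          with \<open>x \<noteq> y\<close> dx have xn: "x \<notin> set (a#y#ys')" by auto
          have "x#xs' = x # ys"
          proof (rule Cons.IH[unfolded xs])
            show "is_path E (x # xs')" using dx sx by (simp add: is_path_def)
            show "is_path E (x # ys)" using xn dy sy sx sym ys0 ys0c by (simp add: is_path_def)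
            show "hd (x # xs') = hd (x # ys)" by simp
            show "last (x # xs') = last (x # ys)" using Cons.prems(4) xs ys0 ys0c by simp
          qed
          hence "a \<in> set xs'" using ys0 by simp
          with dx show ?thesis by simp
        qed
      qed
    qed
  qed
qed

lemma path_snoc: "is_path E ys \<Longrightarrow> v \<notin> set ys \<Longrightarrow> E (last ys) v \<Longrightarrow> is_path E (ys @ [v])"
  unfolding is_path_def by (simp add: successively_append_iff)

locale tsetup =
  fixes V :: "nat set" and E :: "nat \<Rightarrow> nat \<Rightarrow> bool" and r u :: nat
  assumes tree: "is_tree V E" and rV: "r \<in> V" and uV: "u \<in> V" and ur: "u \<noteq> r"
begin

lemma sym: "E x y \<Longrightarrow> E y x" using tree by (auto simp: is_tree_def simple_graph_def)
lemma inV: "E x y \<Longrightarrow> x \<in> V \<and> y \<in> V" using tree by (auto simp: is_tree_def simple_graph_def)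
lemma irr: "\<not> E x x" using tree by (auto simp: is_tree_def simple_graph_def)
lemma finV: "finite V" using tree by (auto simp: is_tree_def simple_graph_def)
lemma nocyc: "\<not>(\<exists>xs. is_cycle E xs)" using tree by (auto simp: is_tree_def)
lemma conn: "x \<in> V \<Longrightarrow> y \<in> V \<Longrightarrow> \<exists>xs. is_path E xs \<and> hd xs = x \<and> last xs = y"
  using tree by (auto simp: is_tree_def connected_graph_def)

lemma uniq: "is_path E xs \<Longrightarrow> is_path E ys \<Longrightarrow> hd xs = hd ys \<Longrightarrow> last xs = last ys \<Longrightarrow> xs = ys"
  by (rule path_unique[OF sym nocyc])

lemma nbrs_sub: "nbrs E v \<subseteq> V" using inV by (auto simp: nbrs_def)
lemma nbrs_fin: "finite (nbrs E v)" using nbrs_sub finV by (rule finite_subset)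

lemma path_two: "is_path E xs \<Longrightarrow> hd xs \<noteq> last xs \<Longrightarrow> E (xs!0) (xs!1) \<and> 1 < length xs"
proof -
  assume a: "is_path E xs" "hd xs \<noteq> last xs"
  then obtain y ys where xs: "xs = y # ys" by (cases xs) (auto simp: is_path_def)
  with a have "ys \<noteq> []" by auto
  then obtain z zs where "ys = z # zs" by (cases ys) auto
  with xs a show ?thesis by (auto simp: is_path_def)
qed

lemma nbrs_ne: assumes "v \<in> V" shows "nbrs E v \<noteq> {}"
proof -
  obtain w where w: "w \<in> V" "w \<noteq> v" using rV uV ur by blast
  obtain xs where xs: "is_path E xs" "hd xs = v" "last xs = w" using conn[OF assms w(1)] by blast
  have "E (xs!0) (xs!1)" "xs \<noteq> []" using path_two[OF xs(1)] xs w(2) by (auto simp: is_path_def)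
  hence "E v (xs!1)" using xs(2) by (simp add: hd_conv_nth)
  thus ?thesis by (auto simp: nbrs_def)
qed

lemma deg_pos: "v \<in> V \<Longrightarrow> 0 < deg E v"
  using nbrs_ne nbrs_fin by (simp add: deg_def card_gt_0_iff)

definition P where "P = (THE xs. is_path E xs \<and> hd xs = r \<and> last xs = u)"

lemma P_props: "is_path E P \<and> hd P = r \<and> last P = u"
proof -
  obtain xs where xs: "is_path E xs" "hd xs = r" "last xs = u" using conn[OF rV uV] by blast
  have "\<exists>!xs. is_path E xs \<and> hd xs = r \<and> last xs = u"
  proof (rule ex1I[where a=xs])
    show "is_path E xs \<and> hd xs = r \<and> last xs = u" using xs by simp
    fix ys assume "is_path E ys \<and> hd ys = r \<and> last ys = u"
    thus "ys = xs" using uniq[of ys xs] xs by simp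
  qed
  thus ?thesis unfolding P_def by (rule theI')
qed

lemma P_path: "is_path E P" and P_hd: "hd P = r" and P_last: "last P = u"
  using P_props by auto

definition k where "k = length P - 1"

lemma len_P: "length P = Suc k" and k_pos: "1 \<le> k"
proof -
  have "1 < length P" using path_two[OF P_path] P_hd P_last ur by auto
  thus "length P = Suc k" "1 \<le> k" unfolding k_def by auto
qed

lemma P0: "P!0 = r" using P_hd len_P by (metis hd_conv_nth list.size(3) nat.distinct(1))
lemma Pk: "P!k = u" using P_last len_P by (metis diff_Suc_1 last_conv_nth list.size(3) nat.distinct(1))

lemma P_dist: "distinct P" using P_path by (simp add: is_path_def)

lemma P_inj: "i \<le> k \<Longrightarrow> j \<le> k \<Longrightarrow> P!i = P!j \<longleftrightarrow> i = j"
  using P_dist len_P by (simp add: nth_eq_iff_index_eq)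

lemma P_edge: "1 \<le> i \<Longrightarrow> i \<le> k \<Longrightarrow> E (P!(i-1)) (P!i)"
proof -
  assume "1 \<le> i" "i \<le> k"
  hence "Suc (i-1) < length P" "Suc (i-1) = i" using len_P by auto
  with successively_nth[of E P "i-1"] P_path show ?thesis by (simp add: is_path_def)
qed

lemma P_V: "i \<le> k \<Longrightarrow> P!i \<in> V"
proof (cases "i = 0")
  case True then show ?thesis using P0 rV by simp
next
  case False
  assume "i \<le> k" thus ?thesis using P_edge[of i] False inV by auto
qed

lemma take_path: assumes "i \<le> k"
  shows "is_path E (take (Suc i) P) \<and> hd (take (Suc i) P) = r \<and> last (take (Suc i) P) = P!i"
proof -
  have l: "Suc i \<le> length P" using assms len_P by simp
  have "successively E (take (Suc i) P @ drop (Suc i) P)" using P_path by (simp add: is_path_def)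
  hence s: "successively E (take (Suc i) P)" by (simp only: successively_append_iff)
  have ne: "take (Suc i) P \<noteq> []" using l by (cases P) auto
  have "distinct (take (Suc i) P)" using P_dist by simp
  moreover have "hd (take (Suc i) P) = r" using ne P0 by (simp add: hd_conv_nth)
  moreover have "last (take (Suc i) P) = P!i" using ne l by (simp add: last_conv_nth)
  ultimately show ?thesis using s ne by (simp add: is_path_def)
qed

definition good :: "nat set \<Rightarrow> bool" where
  "good S \<longleftrightarrow> S \<subseteq> V \<and> r \<in> S \<and> (\<forall>v\<in>S. \<exists>ys. is_path E ys \<and> hd ys = r \<and> last ys = v \<and> set ys \<subseteq> S)"

lemma good_r: "good {r}"
  unfolding good_def using rV by (auto intro!: exI[of _ "[r]"] simp: is_path_def)

lemma good_prefix: assumes "good S" "i \<le> k" "P!i \<in> S" "l \<le> i" shows "P!l \<in> S"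
proof -
  obtain ys where ys: "is_path E ys" "hd ys = r" "last ys = P!i" "set ys \<subseteq> S"
    using assms(1,3) unfolding good_def by blast
  have "ys = take (Suc i) P" using uniq[of ys "take (Suc i) P"] take_path[OF assms(2)] ys(1-3) by simp
  moreover have "l < length (take (Suc i) P)" using assms len_P by simp
  hence "take (Suc i) P ! l \<in> set (take (Suc i) P)" by (rule nth_mem)
  hence "P!l \<in> set (take (Suc i) P)" using assms by simp
  ultimately show ?thesis using ys(4) by auto
qed

lemma good_nbr: assumes "good S" "1 \<le> i" "i \<le> k" "P!i \<notin> S" "x \<in> S" "E (P!i) x"
  shows "x = P!(i-1)"
proof -
  obtain ys where ys: "is_path E ys" "hd ys = r" "last ys = x" "set ys \<subseteq> S"
    using assms(1,5) unfolding good_def by blast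
  have ne: "ys \<noteq> []" using ys by (simp add: is_path_def)
  have "is_path E (ys @ [P!i])"
    using ys assms(4,6) sym by (intro path_snoc) auto
  moreover have "hd (ys @ [P!i]) = r" "last (ys @ [P!i]) = P!i" using ys ne by auto
  ultimately have eq: "ys @ [P!i] = take (Suc i) P" using uniq[of "ys @ [P!i]" "take (Suc i) P"] take_path[OF assms(3)] by simp
  have "take (Suc i) P = take i P @ [P!i]" using assms len_P by (simp add: take_Suc_conv_app_nth)
  with eq have "ys = take i P" by simp
  hence "x = last (take i P)" using ys by simp
  moreover have "take i P \<noteq> []" using assms(2,3) len_P by (cases P) auto
  ultimately show ?thesis using assms(2,3) len_P by (simp add: last_conv_nth)
qed

lemma good_step: assumes "good S" "S \<subseteq> S'" "\<And>w. w \<in> S' \<Longrightarrow> w \<notin> S \<Longrightarrow> \<exists>x\<in>S. E w x"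
  shows "good S'"
  unfolding good_def
proof (intro conjI ballI)
  show "r \<in> S'" using assms unfolding good_def by auto
  show "S' \<subseteq> V" using assms inV unfolding good_def by blast
  fix v assume v: "v \<in> S'"
  show "\<exists>ys. is_path E ys \<and> hd ys = r \<and> last ys = v \<and> set ys \<subseteq> S'"
  proof (cases "v \<in> S")
    case True then show ?thesis using assms(1,2) unfolding good_def by blast
  next
    case False
    then obtain x where x: "x \<in> S" "E v x" using assms(3) v by blast
    obtain ys where ys: "is_path E ys" "hd ys = r" "last ys = x" "set ys \<subseteq> S"
      using assms(1) x(1) unfolding good_def by blast
    have ne: "ys \<noteq> []" using ys by (simp add: is_path_def)
    have "is_path E (ys @ [v])"
      using ys False x sym by (intro path_snoc) auto
    moreover have "hd (ys @ [v]) = r" "last (ys @ [v]) = v" "set (ys @ [v]) \<subseteq> S'" using ys ne v assms(2) by auto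
    ultimately show ?thesis by blast
  qed
qed

end



lemma informed_snoc: "i \<le> length hs \<Longrightarrow> informed_at r (hs@[x]) i = informed_at r hs i"
  unfolding informed_at_def by (auto simp: nth_append)
lemma current_snoc: "current r (hs@[x]) = snd x" unfolding current_def informed_at_def by simp
lemma current_nil: "current r [] = {r}" unfolding current_def informed_at_def by simp

context tsetup
begin

definition Inv where "Inv hs \<longleftrightarrow> good (current r hs) \<and> (\<forall>i\<le>length hs. informed_at r hs i \<subseteq> current r hs)"
definition Qd where "Qd hs \<longleftrightarrow> (\<forall>i\<le>length hs. u \<notin> informed_at r hs i)"
definition kprop where "kprop K \<longleftrightarrow> (\<forall>hs. good (current r hs) \<longrightarrow>
   map_pmf fst (K hs) = requests V E (current r hs) \<and>
   (\<forall>x\<in>set_pmf (K hs). current r hs \<subseteq> snd x \<and>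
       snd x \<subseteq> current r hs \<union> {w \<in> V - current r hs. fst x w \<in> current r hs}))"

lemma Inv0: "Inv []" by (simp add: Inv_def current_nil good_r informed_at_def)

lemma Qd_iff: "Inv hs \<Longrightarrow> Qd hs \<longleftrightarrow> u \<notin> current r hs"
  unfolding Inv_def Qd_def current_def by blast

lemma Qd_anti: "Qd (hs@[x]) \<Longrightarrow> Qd hs"
  unfolding Qd_def
proof (intro allI impI)
  fix i assume a: "\<forall>i\<le>length (hs @ [x]). u \<notin> informed_at r (hs @ [x]) i" "i \<le> length hs"
  hence "u \<notin> informed_at r (hs @ [x]) i" by simp
  thus "u \<notin> informed_at r hs i" using informed_snoc[OF a(2)] by simp
qed

lemma req_set_pmf: assumes "c \<in> set_pmf (requests V E S)" "w \<in> V - S" shows "c w \<in> nbrs E w"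
proof -
  have fin: "finite (V - S)" using finV by simp
  have "c \<in> PiE_dflt (V - S) undefined (set_pmf \<circ> (\<lambda>w. pmf_of_set (nbrs E w)))"
    using assms(1) unfolding requests_def set_Pi_pmf[OF fin] .
  hence "c w \<in> set_pmf (pmf_of_set (nbrs E w))" using assms(2) by (simp add: PiE_dflt_def)
  thus ?thesis using nbrs_ne[of w] nbrs_fin[of w] assms(2) by simp
qed

lemma req_prob: assumes "a \<in> V - S" "b \<in> nbrs E a"
  shows "emeasure (requests V E S) {c. c a = b} = ennreal (1 / real (deg E a))"
proof -
  have fin: "finite (V - S)" using finV by simp
  have "emeasure (requests V E S) {c. c a = b} = emeasure (map_pmf (\<lambda>c. c a) (requests V E S)) {b}"
    by (simp add: vimage_def)
  also have "map_pmf (\<lambda>c. c a) (requests V E S) = pmf_of_set (nbrs E a)"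
    unfolding requests_def using Pi_pmf_component[OF fin, of a undefined "\<lambda>w. pmf_of_set (nbrs E w)"] assms(1) by simp
  also have "emeasure (measure_pmf (pmf_of_set (nbrs E a))) {b} = ennreal (real (card (nbrs E a \<inter> {b})) / real (card (nbrs E a)))"
    using nbrs_ne[of a] nbrs_fin[of a] assms(1) by (simp add: emeasure_pmf_of_set)
  also have "nbrs E a \<inter> {b} = {b}" using assms(2) by auto
  finally show ?thesis by (simp add: deg_def)
qed

lemma fst_in: assumes "kprop K" "good (current r hs)" "x \<in> set_pmf (K hs)"
  shows "fst x \<in> set_pmf (requests V E (current r hs))"
proof -
  have "fst x \<in> set_pmf (map_pmf fst (K hs))" using assms(3) by simp
  thus ?thesis using assms(1,2) unfolding kprop_def by simp
qed

lemma Inv_step: assumes "kprop K" "Inv hs" "x \<in> set_pmf (K hs)" shows "Inv (hs@[x])"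
proof -
  let ?S = "current r hs"
  have g: "good ?S" using assms(2) by (simp add: Inv_def)
  have sub: "?S \<subseteq> snd x" and sub2: "snd x \<subseteq> ?S \<union> {w \<in> V - ?S. fst x w \<in> ?S}"
    using assms(1,3) g unfolding kprop_def by blast+
  have fx: "fst x \<in> set_pmf (requests V E ?S)" by (rule fst_in[OF assms(1) g assms(3)])
  have "good (snd x)"
  proof (rule good_step[OF g sub])
    fix w assume "w \<in> snd x" "w \<notin> ?S"
    hence w: "w \<in> V - ?S" "fst x w \<in> ?S" using sub2 by auto
    have "fst x w \<in> nbrs E w" by (rule req_set_pmf[OF fx w(1)])
    thus "\<exists>y\<in>?S. E w y" using w(2) by (auto simp: nbrs_def)
  qed
  moreover have "\<forall>i\<le>length (hs@[x]). informed_at r (hs@[x]) i \<subseteq> snd x"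
  proof (intro allI impI)
    fix i assume "i \<le> length (hs@[x])"
    show "informed_at r (hs @ [x]) i \<subseteq> snd x"
    proof (cases "i \<le> length hs")
      case True
      then show ?thesis using informed_snoc[OF True, where x=x and r=r] assms(2) sub True unfolding Inv_def by auto
    next
      case False
      hence "i = Suc (length hs)" using \<open>i \<le> length (hs@[x])\<close> by simp
      then show ?thesis unfolding informed_at_def by simp
    qed
  qed
  ultimately show ?thesis unfolding Inv_def current_snoc by simp
qed

definition qi where "qi S = (LEAST i. P!i \<notin> S)"

lemma q_props: assumes "good S" "u \<notin> S"
  shows "1 \<le> qi S \<and> qi S \<le> k \<and> P!(qi S - 1) \<in> S \<and> P!(qi S) \<notin> S \<and> (\<forall>l. qi S \<le> l \<and> l \<le> k \<longrightarrow> P!l \<notin> S) \<and> (\<forall>l<qi S. P!l \<in> S)"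
proof -
  have ex: "P!k \<notin> S" using assms Pk by simp
  have q1: "P!(qi S) \<notin> S" unfolding qi_def using ex by (rule LeastI)
  have q2: "qi S \<le> k" unfolding qi_def using ex by (rule Least_le)
  have q3: "\<forall>l<qi S. P!l \<in> S" unfolding qi_def using not_less_Least by blast
  have rS: "r \<in> S" using assms(1) by (simp add: good_def)
  have q0: "qi S \<noteq> 0" using q1 P0 rS by (metis)
  have q4: "\<forall>l. qi S \<le> l \<and> l \<le> k \<longrightarrow> P!l \<notin> S" using good_prefix[OF assms(1)] q1 by blast
  show ?thesis using q0 q1 q2 q3 q4 by auto
qed

definition f where "f S = (\<Sum>i\<in>{i. 1 \<le> i \<and> i \<le> k \<and> P!i \<notin> S}. deg E (P!i))"
definition M where "M = (\<Sum>i\<in>{1..k}. deg E (P!i))"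

lemma f_le_M: "f S \<le> M" unfolding f_def M_def by (rule sum_mono2) auto
lemma f_r: "f {r} = M"
proof -
  have "{i. 1 \<le> i \<and> i \<le> k \<and> P!i \<notin> {r}} = {1..k}" using P_inj[of _ 0] P0 by fastforce
  thus ?thesis by (simp add: f_def M_def)
qed
lemma f_done: "good S \<Longrightarrow> u \<in> S \<Longrightarrow> f S = 0"
proof -
  assume "good S" "u \<in> S"
  hence e: "{i. 1 \<le> i \<and> i \<le> k \<and> P!i \<notin> S} = {}" using good_prefix[of S k] Pk by auto
  show ?thesis unfolding f_def e by simp
qed

end


context tsetup
begin

lemma finA: "finite {i. 1 \<le> i \<and> i \<le> k \<and> P!i \<notin> S}"
  by (rule finite_subset[of _ "{1..k}"]) auto

lemma trans_lower: assumes g: "good S" and uS: "u \<notin> S" and sub: "S \<subseteq> S'"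
  and sub2: "S' \<subseteq> S \<union> {w\<in>V-S. c w \<in> S}" and cn: "\<And>w. w \<in> V - S \<Longrightarrow> c w \<in> nbrs E w"
  shows "f S \<le> f S' + (if c (P!qi S) = P!(qi S - 1) then deg E (P!qi S) else 0)"
proof -
  let ?q = "qi S"
  let ?A = "{i. 1 \<le> i \<and> i \<le> k \<and> P!i \<notin> S}"
  let ?A' = "{i. 1 \<le> i \<and> i \<le> k \<and> P!i \<notin> S'}"
  let ?B = "if c (P!?q) = P!(?q - 1) then {?q} else {}"
  note qp = q_props[OF g uS]
  have AB: "?A \<subseteq> ?A' \<union> ?B"
  proof
    fix i assume i: "i \<in> ?A"
    show "i \<in> ?A' \<union> ?B"
    proof (cases "P!i \<in> S'")
      case False then show ?thesis using i by auto
    next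
      case True
      with i sub2 have w: "P!i \<in> V - S" "c (P!i) \<in> S" by auto
      have "c (P!i) \<in> nbrs E (P!i)" by (rule cn[OF w(1)])
      hence "E (P!i) (c (P!i))" by (simp add: nbrs_def)
      hence eq: "c (P!i) = P!(i-1)" using good_nbr[OF g _ _ _ w(2)] i by auto
      have "\<not> i < ?q" using qp i by auto
      moreover have "\<not> ?q \<le> i - 1" using qp eq w(2) i by auto
      ultimately have "i = ?q" by auto
      thus ?thesis using eq by auto
    qed
  qed
  have finB: "finite ?B" by simp
  have "f S = sum (\<lambda>i. deg E (P!i)) ?A" by (simp add: f_def)
  also have "\<dots> \<le> sum (\<lambda>i. deg E (P!i)) (?A' \<union> ?B)"
    by (rule sum_mono2) (use AB finA[of S'] in auto)
  also have "\<dots> \<le> sum (\<lambda>i. deg E (P!i)) ?A' + sum (\<lambda>i. deg E (P!i)) ?B"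
    using sum.union_inter[OF finA[of S'] finB, of "\<lambda>i. deg E (P!i)"] by linarith
  also have "sum (\<lambda>i. deg E (P!i)) ?B = (if c (P!?q) = P!(?q - 1) then deg E (P!?q) else 0)" by simp
  finally show ?thesis by (simp add: f_def)
qed

lemma trans_upper: assumes g: "good S" and uS: "u \<notin> S" and sub: "S \<subseteq> S'"
  and inf: "c (P!qi S) = P!(qi S - 1) \<Longrightarrow> P!qi S \<in> S'"
  shows "f S' + (if c (P!qi S) = P!(qi S - 1) then deg E (P!qi S) else 0) \<le> f S"
proof -
  let ?q = "qi S"
  let ?A = "{i. 1 \<le> i \<and> i \<le> k \<and> P!i \<notin> S}"
  let ?A' = "{i. 1 \<le> i \<and> i \<le> k \<and> P!i \<notin> S'}"
  note qp = q_props[OF g uS]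
  show ?thesis
  proof (cases "c (P!?q) = P!(?q - 1)")
    case True
    have qA: "?q \<in> ?A" using qp by auto
    have "?A' \<subseteq> ?A - {?q}" using sub inf True by auto
    hence "f S' \<le> sum (\<lambda>i. deg E (P!i)) (?A - {?q})" unfolding f_def
      by (intro sum_mono2) (use finA[of S] in auto)
    moreover have "f S = deg E (P!?q) + sum (\<lambda>i. deg E (P!i)) (?A - {?q})"
      unfolding f_def using sum.remove[OF finA qA] by simp
    ultimately show ?thesis using True by simp
  next
    case False
    have "?A' \<subseteq> ?A" using sub by auto
    hence "f S' \<le> f S" unfolding f_def by (intro sum_mono2) (use finA[of S] in auto)
    thus ?thesis using False by simp
  qed
qed

lemma G_int: assumes "a \<in> V - S" "b \<in> nbrs E a"
  shows "(\<integral>\<^sup>+c. of_nat (deg E a) * indicator {c. c a = b} c \<partial>requests V E S) = 1"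
proof -
  have d: "0 < deg E a" using deg_pos assms(1) by auto
  have "(\<integral>\<^sup>+c. of_nat (deg E a) * indicator {c. c a = b} c \<partial>requests V E S)
      = of_nat (deg E a) * emeasure (requests V E S) {c. c a = b}"
    by (simp add: nn_integral_cmult_indicator)
  also have "\<dots> = ennreal (real (deg E a)) * ennreal (1 / real (deg E a))"
    by (simp add: req_prob[OF assms] ennreal_of_nat_eq_real_of_nat)
  also have "\<dots> = ennreal (real (deg E a) * (1 / real (deg E a)))" by (rule ennreal_mult[symmetric]) auto
  also have "real (deg E a) * (1 / real (deg E a)) = 1" using d by simp
  finally show ?thesis by simp
qed

lemma round_lower: assumes kp: "kprop K" and iv: "Inv hs"
  shows "of_nat (f (current r hs)) \<le> (\<integral>\<^sup>+x. of_nat (f (current r (hs@[x]))) \<partial>K hs) + indicator {hs. Qd hs} hs"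
proof (cases "u \<in> current r hs")
  case True
  then show ?thesis using f_done iv by (simp add: Inv_def)
next
  case False
  let ?S = "current r hs"
  have g: "good ?S" using iv by (simp add: Inv_def)
  have Q: "Qd hs" using Qd_iff[OF iv] False by simp
  let ?q = "qi ?S"
  let ?a = "P!?q" let ?b = "P!(?q - 1)"
  note qp = q_props[OF g False]
  have a: "?a \<in> V - ?S" using qp P_V by auto
  have b: "?b \<in> nbrs E ?a" using P_edge[of ?q] qp sym by (auto simp: nbrs_def)
  let ?G = "\<lambda>c. of_nat (deg E ?a) * indicator {c. c ?a = ?b} c :: ennreal"
  have pw: "of_nat (f ?S) \<le> of_nat (f (current r (hs@[x]))) + ?G (fst x)" if x: "x \<in> set_pmf (K hs)" for x
  proof -
    have sub: "?S \<subseteq> snd x" and sub2: "snd x \<subseteq> ?S \<union> {w \<in> V - ?S. fst x w \<in> ?S}"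
      using kp x g unfolding kprop_def by blast+
    have fx: "fst x \<in> set_pmf (requests V E ?S)" by (rule fst_in[OF kp g x])
    have "f ?S \<le> f (snd x) + (if fst x ?a = ?b then deg E ?a else 0)"
      by (rule trans_lower[OF g False sub sub2 req_set_pmf[OF fx]])
    hence "of_nat (f ?S) \<le> (of_nat (f (snd x) + (if fst x ?a = ?b then deg E ?a else 0)) :: ennreal)"
      by (simp only: of_nat_le_iff)
    thus ?thesis by (cases "fst x ?a = ?b") (simp_all add: current_snoc indicator_def)
  qed
  have "of_nat (f ?S) = (\<integral>\<^sup>+x. of_nat (f ?S) \<partial>K hs)" by simp
  also have "\<dots> \<le> (\<integral>\<^sup>+x. of_nat (f (current r (hs@[x]))) + ?G (fst x) \<partial>K hs)"
    by (rule nn_integral_mono_AE, rule AE_pmfI) (rule pw)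
  also have "\<dots> = (\<integral>\<^sup>+x. of_nat (f (current r (hs@[x]))) \<partial>K hs) + (\<integral>\<^sup>+x. ?G (fst x) \<partial>K hs)"
    by (simp add: nn_integral_add)
  also have "(\<integral>\<^sup>+x. ?G (fst x) \<partial>K hs) = (\<integral>\<^sup>+c. ?G c \<partial>map_pmf fst (K hs))" by simp
  also have "\<dots> = 1" using kp g G_int[OF a b] unfolding kprop_def by simp
  finally show ?thesis using Q by simp
qed

lemma kprop_pull: "kprop (pull_kernel V E r)"
  unfolding kprop_def pull_kernel_def Let_def by (auto simp: pmf.map_comp o_def)

lemma pull_support: "x \<in> set_pmf (pull_kernel V E r hs) \<Longrightarrow>
   snd x = current r hs \<union> {w \<in> V - current r hs. fst x w \<in> current r hs}"
  unfolding pull_kernel_def Let_def by auto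

lemma kprop_adv: assumes va: "valid_adversary V r adv" shows "kprop (rpull_adv_kernel V E r adv)"
  unfolding kprop_def
proof (intro allI impI conjI ballI)
  fix hs
  show "map_pmf fst (rpull_adv_kernel V E r adv hs) = requests V E (current r hs)"
    unfolding rpull_adv_kernel_def Let_def by (simp add: pmf.map_comp o_def)
  fix x assume x: "x \<in> set_pmf (rpull_adv_kernel V E r adv hs)"
  then obtain c where x': "x = (c, current r hs \<union> adv hs c ` {v \<in> current r hs. req_set V (current r hs) c v \<noteq> {}})"
    unfolding rpull_adv_kernel_def Let_def by auto
  show "current r hs \<subseteq> snd x" using x' by auto
  show "snd x \<subseteq> current r hs \<union> {w \<in> V - current r hs. fst x w \<in> current r hs}"
  proof
    fix w assume "w \<in> snd x"
    then consider "w \<in> current r hs" | v where "v \<in> current r hs" "req_set V (current r hs) c v \<noteq> {}" "w = adv hs c v"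
      using x' by auto
    thus "w \<in> current r hs \<union> {w \<in> V - current r hs. fst x w \<in> current r hs}"
    proof cases
      case 1 then show ?thesis by simp
    next
      case 2
      hence "w \<in> req_set V (current r hs) c v" using va unfolding valid_adversary_def by blast
      then show ?thesis using x' 2 by (auto simp: req_set_def)
    qed
  qed
qed

lemma kprop_rand: "kprop (rpull_random_kernel V E r)"
  unfolding kprop_def
proof (intro allI impI conjI ballI)
  fix hs assume g: "good (current r hs)"
  let ?S = "current r hs"
  show "map_pmf fst (rpull_random_kernel V E r hs) = requests V E ?S"
    unfolding rpull_random_kernel_def Let_def
    by (simp add: map_bind_pmf pmf.map_comp o_def map_pmf_const bind_return_pmf')
  fix x assume x: "x \<in> set_pmf (rpull_random_kernel V E r hs)"
  then obtain c sel where x': "x = (c, ?S \<union> sel ` {v \<in> ?S. req_set V ?S c v \<noteq> {}})"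
    and sel: "sel \<in> set_pmf (Pi_pmf {v \<in> ?S. req_set V ?S c v \<noteq> {}} undefined (\<lambda>v. pmf_of_set (req_set V ?S c v)))"
    unfolding rpull_random_kernel_def Let_def by auto
  have SV: "?S \<subseteq> V" using g by (simp add: good_def)
  have finA: "finite {v \<in> ?S. req_set V ?S c v \<noteq> {}}" using SV finV by (auto intro: finite_subset)
  have selv: "sel v \<in> req_set V ?S c v" if v: "v \<in> ?S" "req_set V ?S c v \<noteq> {}" for v
  proof -
    have finR: "finite (req_set V ?S c v)" using finV by (simp add: req_set_def)
    from sel have "sel \<in> PiE_dflt {v \<in> ?S. req_set V ?S c v \<noteq> {}} undefined (set_pmf \<circ> (\<lambda>v. pmf_of_set (req_set V ?S c v)))"
      unfolding set_Pi_pmf[OF finA] .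
    hence "sel v \<in> set_pmf (pmf_of_set (req_set V ?S c v))" using v by (simp add: PiE_dflt_def)
    thus ?thesis using v finR by simp
  qed
  show "?S \<subseteq> snd x" using x' by auto
  show "snd x \<subseteq> ?S \<union> {w \<in> V - ?S. fst x w \<in> ?S}"
  proof
    fix w assume "w \<in> snd x"
    then consider "w \<in> ?S" | v where "v \<in> ?S" "req_set V ?S c v \<noteq> {}" "w = sel v"
      using x' by auto
    thus "w \<in> ?S \<union> {w \<in> V - ?S. fst x w \<in> ?S}"
    proof cases
      case 1 then show ?thesis by simp
    next
      case 2
      hence "w \<in> req_set V ?S c v" using selv by blast
      then show ?thesis using x' 2 by (auto simp: req_set_def)
    qed
  qed
qed

lemma round_upper_pull: assumes iv: "Inv hs"
  shows "(\<integral>\<^sup>+x. of_nat (f (current r (hs@[x]))) \<partial>pull_kernel V E r hs) + indicator {hs. Qd hs} hs \<le> of_nat (f (current r hs))"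
proof (cases "u \<in> current r hs")
  case True
  have "Inv (hs@[x])" if "x \<in> set_pmf (pull_kernel V E r hs)" for x
    using Inv_step[OF kprop_pull iv that] .
  have "(\<integral>\<^sup>+x. of_nat (f (current r (hs@[x]))) \<partial>pull_kernel V E r hs) = (\<integral>\<^sup>+x. 0 \<partial>pull_kernel V E r hs)"
  proof (rule nn_integral_cong_AE, rule AE_pmfI)
    fix x assume x: "x \<in> set_pmf (pull_kernel V E r hs)"
    have "Inv (hs@[x])" using Inv_step[OF kprop_pull iv x] .
    moreover have "u \<in> current r (hs@[x])" using pull_support[OF x] True by (simp add: current_snoc)
    ultimately show "of_nat (f (current r (hs@[x]))) = (0::ennreal)" using f_done by (simp add: Inv_def)
  qed
  moreover have "\<not> Qd hs" using Qd_iff[OF iv] True by simp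
  ultimately show ?thesis by simp
next
  case False
  let ?S = "current r hs"
  have g: "good ?S" using iv by (simp add: Inv_def)
  have Q: "Qd hs" using Qd_iff[OF iv] False by simp
  let ?q = "qi ?S"
  let ?a = "P!?q" let ?b = "P!(?q - 1)"
  note qp = q_props[OF g False]
  have a: "?a \<in> V - ?S" using qp P_V by auto
  have b: "?b \<in> nbrs E ?a" using P_edge[of ?q] qp sym by (auto simp: nbrs_def)
  let ?G = "\<lambda>c. of_nat (deg E ?a) * indicator {c. c ?a = ?b} c :: ennreal"
  have pw: "of_nat (f (current r (hs@[x]))) + ?G (fst x) \<le> of_nat (f ?S)" if x: "x \<in> set_pmf (pull_kernel V E r hs)" for x
  proof -
    have sx: "snd x = ?S \<union> {w \<in> V - ?S. fst x w \<in> ?S}" by (rule pull_support[OF x])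
    have "f (snd x) + (if fst x ?a = ?b then deg E ?a else 0) \<le> f ?S"
      by (rule trans_upper[OF g False]) (use sx qp a in auto)
    hence "(of_nat (f (snd x) + (if fst x ?a = ?b then deg E ?a else 0)) :: ennreal) \<le> of_nat (f ?S)"
      by (simp only: of_nat_le_iff)
    thus ?thesis by (cases "fst x ?a = ?b") (simp_all add: current_snoc indicator_def)
  qed
  have "(\<integral>\<^sup>+x. ?G (fst x) \<partial>pull_kernel V E r hs) = (\<integral>\<^sup>+c. ?G c \<partial>map_pmf fst (pull_kernel V E r hs))" by simp
  also have "\<dots> = 1" using kprop_pull g G_int[OF a b] unfolding kprop_def by simp
  finally have G1: "(\<integral>\<^sup>+x. ?G (fst x) \<partial>pull_kernel V E r hs) = 1" .
  have "(\<integral>\<^sup>+x. of_nat (f (current r (hs@[x]))) \<partial>pull_kernel V E r hs) + 1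
     = (\<integral>\<^sup>+x. of_nat (f (current r (hs@[x]))) \<partial>pull_kernel V E r hs) + (\<integral>\<^sup>+x. ?G (fst x) \<partial>pull_kernel V E r hs)"
    by (simp only: G1)
  also have "\<dots> = (\<integral>\<^sup>+x. of_nat (f (current r (hs@[x]))) + ?G (fst x) \<partial>pull_kernel V E r hs)"
    by (simp add: nn_integral_add)
  also have "\<dots> \<le> (\<integral>\<^sup>+x. of_nat (f ?S) \<partial>pull_kernel V E r hs)"
    by (rule nn_integral_mono_AE, rule AE_pmfI) (rule pw)
  also have "\<dots> = of_nat (f ?S)" by simp
  finally show ?thesis using Q by simp
qed

end


lemma indep_H:
  fixes p :: "'a \<Rightarrow> 'b pmf"
  assumes fin: "finite B" and aB: "a \<notin> B" and hA: "\<And>g y. Aev (g(a:=y)) = Aev g" and d: "0 < d"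
    and pb: "emeasure (p a) {b} = ennreal (1 / real d)"
  shows "(\<integral>\<^sup>+c. indicator {c. Aev c} c + of_nat d * indicator {c. \<not> Aev c \<and> c a = b} c \<partial>Pi_pmf (insert a B) dflt p) = 1"
proof -
  let ?Q = "Pi_pmf B dflt p"
  let ?al = "emeasure ?Q {g. Aev g}" and ?be = "emeasure ?Q {g. \<not> Aev g}"
  have one: "?al + ?be = 1"
  proof -
    have "?al + ?be = emeasure ?Q ({g. Aev g} \<union> {g. \<not> Aev g})" by (rule plus_emeasure) auto
    also have "{g. Aev g} \<union> {g. \<not> Aev g} = space ?Q" by auto
    finally show ?thesis by (simp add: measure_pmf.emeasure_space_1)
  qed
  have inner: "(\<integral>\<^sup>+g. indicator {c. Aev c} (g(a:=y)) + of_nat d * indicator {c. \<not> Aev c \<and> c a = b} (g(a:=y)) \<partial>?Q)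
        = ?al + (of_nat d * indicator {b} y) * ?be" for y
  proof -
    have "(\<integral>\<^sup>+g. indicator {c. Aev c} (g(a:=y)) + of_nat d * indicator {c. \<not> Aev c \<and> c a = b} (g(a:=y)) \<partial>?Q)
        = (\<integral>\<^sup>+g. indicator {g. Aev g} g + (of_nat d * indicator {b} y) * indicator {g. \<not> Aev g} g \<partial>?Q)"
      by (rule nn_integral_cong) (simp add: hA indicator_def)
    also have "\<dots> = (\<integral>\<^sup>+g. indicator {g. Aev g} g \<partial>?Q) + (\<integral>\<^sup>+g. (of_nat d * indicator {b} y) * indicator {g. \<not> Aev g} g \<partial>?Q)"
      by (simp add: nn_integral_add)
    also have "\<dots> = ?al + (of_nat d * indicator {b} y) * ?be"
      by (simp add: nn_integral_cmult_indicator)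
    finally show ?thesis .
  qed
  have "(\<integral>\<^sup>+c. indicator {c. Aev c} c + of_nat d * indicator {c. \<not> Aev c \<and> c a = b} c \<partial>Pi_pmf (insert a B) dflt p)
     = (\<integral>\<^sup>+y. \<integral>\<^sup>+g. indicator {c. Aev c} (g(a:=y)) + of_nat d * indicator {c. \<not> Aev c \<and> c a = b} (g(a:=y)) \<partial>?Q \<partial>p a)"
    unfolding Pi_pmf_insert[OF fin aB] by (simp add: nn_integral_pair_pmf' case_prod_beta)
  also have "\<dots> = (\<integral>\<^sup>+y. ?al + (of_nat d * ?be) * indicator {b} y \<partial>p a)"
    unfolding inner by (simp add: ac_simps)
  also have "\<dots> = ?al + (of_nat d * ?be) * emeasure (p a) {b}"
    by (simp add: nn_integral_add nn_integral_cmult_indicator)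
  also have "(of_nat d * ?be) * emeasure (p a) {b} = ?be * (ennreal (real d) * ennreal (1 / real d))"
    by (simp add: pb ennreal_of_nat_eq_real_of_nat ac_simps)
  also have "ennreal (real d) * ennreal (1 / real d) = ennreal (real d * (1 / real d))"
    by (rule ennreal_mult[symmetric]) auto
  also have "real d * (1 / real d) = 1" using d by simp
  finally show ?thesis using one by simp
qed



context tsetup
begin

lemma new_path: assumes g: "good S" and uS: "u \<notin> S" and sub2: "S' \<subseteq> S \<union> {w\<in>V-S. c w \<in> S}"
  and cn: "\<And>w. w \<in> V - S \<Longrightarrow> c w \<in> nbrs E w" and i: "i \<le> k" "P!i \<in> S'"
  shows "P!i \<in> S \<or> i = qi S"
proof (rule ccontr)
  assume nn: "\<not> (P!i \<in> S \<or> i = qi S)"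
  note qp = q_props[OF g uS]
  have i1: "1 \<le> i" using nn P0 g by (cases i) (auto simp: good_def)
  from nn i sub2 have w: "P!i \<in> V - S" "c (P!i) \<in> S" by auto
  have "c (P!i) \<in> nbrs E (P!i)" by (rule cn[OF w(1)])
  hence "E (P!i) (c (P!i))" by (simp add: nbrs_def)
  hence eq: "c (P!i) = P!(i-1)" using good_nbr[OF g i1 i(1) _ w(2)] nn by auto
  have "\<not> i < qi S" using qp nn by auto
  moreover have "\<not> qi S \<le> i - 1" using qp eq w(2) i by auto
  ultimately show False using nn by auto
qed

lemma f_mono: "S \<subseteq> S' \<Longrightarrow> f S' \<le> f S"
  unfolding f_def by (intro sum_mono2) (use finA[of S] in auto)

lemma f_drop: assumes "good S" "u \<notin> S" "S \<subseteq> S'" "P!(qi S) \<in> S'"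
  shows "f S' + deg E (P!qi S) \<le> f S"
  using trans_upper[OF assms(1-3), of "\<lambda>_. P!(qi S - 1)"] assms(4) by simp

lemma f_ge: assumes "good S" "u \<notin> S" shows "deg E (P!qi S) \<le> f S"
proof -
  have "f (insert (P!qi S) S) + deg E (P!qi S) \<le> f S" by (rule f_drop[OF assms]) auto
  thus ?thesis by simp
qed

definition Psi where "Psi S = (if u \<in> S then 0 else card (nbrs E (P!(qi S - 1)) - S) + 2 * f S)"

lemma adv_pw:
  assumes va: "valid_adversary V r adv" and g: "good (current r hs)" and uS: "u \<notin> current r hs"
    and c: "c \<in> set_pmf (requests V E (current r hs))"
  defines "S \<equiv> current r hs"
  defines "S' \<equiv> S \<union> adv hs c ` {v \<in> S. req_set V S c v \<noteq> {}}"
  defines "a \<equiv> P!qi S" and "b \<equiv> P!(qi S - 1)"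
  defines "Aev \<equiv> (\<exists>v\<in>nbrs E b - S - {a}. c v = b)"
  shows "Psi S' + (if Aev then 1 else if c a = b then deg E a else 0) \<le> Psi S"
proof -
  have g': "good S" using g by (simp add: S_def)
  have uS': "u \<notin> S" using uS by (simp add: S_def)
  have cn: "\<And>w. w \<in> V - S \<Longrightarrow> c w \<in> nbrs E w" using req_set_pmf c by (simp add: S_def)
  have xin: "(c, S') \<in> set_pmf (rpull_adv_kernel V E r adv hs)"
    using c unfolding rpull_adv_kernel_def Let_def S'_def S_def by auto
  have sub: "S \<subseteq> S'" and sub2: "S' \<subseteq> S \<union> {w \<in> V - S. c w \<in> S}"
    using kprop_adv[OF va] g xin unfolding kprop_def S_def by fastforce+
  have served: "adv hs c v \<in> S' \<and> adv hs c v \<in> V - S \<and> c (adv hs c v) = v"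
    if "v \<in> S" "w \<in> V - S" "c w = v" for v w
  proof -
    have ne: "req_set V S c v \<noteq> {}" using that by (auto simp: req_set_def)
    hence "adv hs c v \<in> req_set V S c v" using va that(1) unfolding valid_adversary_def S_def by blast
    moreover have "adv hs c v \<in> S'" using that(1) ne unfolding S'_def by blast
    ultimately show ?thesis by (simp add: req_set_def)
  qed
  note qp = q_props[OF g' uS']
  have aVS: "a \<in> V - S" using qp P_V by (auto simp: a_def)
  have bS: "b \<in> S" using qp by (simp add: b_def)
  have gS': "good S'"
  proof (rule good_step[OF g' sub])
    fix w assume "w \<in> S'" "w \<notin> S"
    hence w: "w \<in> V - S" "c w \<in> S" using sub2 by auto
    thus "\<exists>y\<in>S. E w y" using cn[OF w(1)] by (auto simp: nbrs_def)
  qed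
  have da: "1 \<le> deg E a" using deg_pos aVS by (simp add: Suc_le_eq)
  have hle: "(if Aev then 1 else if c a = b then deg E a else 0) \<le> deg E a" using da by auto
  have fS: "deg E a \<le> f S" using f_ge[OF g' uS'] by (simp add: a_def)
  show ?thesis
  proof (cases "u \<in> S'")
    case True
    then show ?thesis using hle fS uS' by (simp add: Psi_def)
  next
    case uS'': False
    note qp' = q_props[OF gS' uS'']
    show ?thesis
    proof (cases "a \<in> S'")
      case True
      have allq: "\<forall>l\<le>qi S. P!l \<in> S'" using qp sub True by (auto simp: a_def le_less)
      have qk: "qi S < k" using True uS'' Pk qp by (metis a_def le_neq_implies_less)
      have nq1: "P!(Suc (qi S)) \<notin> S'"
      proof
        assume "P!(Suc (qi S)) \<in> S'"
        hence "P!(Suc (qi S)) \<in> S \<or> Suc (qi S) = qi S" using new_path[OF g' uS' sub2 cn, of "Suc (qi S)"] qk by auto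
        thus False using qp qk by auto
      qed
      have "\<not> qi S' \<le> qi S" using allq qp' by auto
      moreover have "\<not> Suc (qi S) < qi S'" using qp' nq1 by auto
      ultimately have qeq: "qi S' = Suc (qi S)" by auto
      have c1: "card (nbrs E a - S') \<le> deg E a" unfolding deg_def by (rule card_mono[OF nbrs_fin]) auto
      have f1: "f S' + deg E a \<le> f S" using f_drop[OF g' uS' sub] True by (simp add: a_def)
      have "Psi S' = card (nbrs E a - S') + 2 * f S'" using uS'' qeq by (simp add: Psi_def a_def)
      thus ?thesis using c1 f1 hle uS' by (simp add: Psi_def)
    next
      case False
      have "\<forall>l<qi S. P!l \<in> S'" using qp sub by auto
      hence "\<not> qi S < qi S'" using False qp' by (auto simp: a_def)
      moreover have "\<not> qi S' < qi S" using qp qp' sub by auto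
      ultimately have qeq: "qi S' = qi S" by auto
      have PsiS': "Psi S' = card (nbrs E b - S') + 2 * f S'" using uS'' qeq by (simp add: Psi_def b_def)
      have PsiS: "Psi S = card (nbrs E b - S) + 2 * f S" using uS' by (simp add: Psi_def b_def)
      have fm: "f S' \<le> f S" by (rule f_mono[OF sub])
      have cm: "card (nbrs E b - S') \<le> card (nbrs E b - S)" by (rule card_mono) (use nbrs_fin sub in auto)
      have "card (nbrs E b - S') + (if Aev then 1 else if c a = b then deg E a else 0) \<le> card (nbrs E b - S)"
      proof (cases Aev)
        case True
        then obtain v where v: "v \<in> nbrs E b - S - {a}" "c v = b" unfolding Aev_def by blast
        have vV: "v \<in> V - S" using v nbrs_sub by auto
        let ?w = "adv hs c b"
        have w: "?w \<in> S'" "?w \<in> V - S" "c ?w = b" using served[OF bS vV v(2)] by auto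
        have "E ?w b" using cn[OF w(2)] w(3) by (simp add: nbrs_def)
        hence wn: "?w \<in> nbrs E b - S" using w sym by (auto simp: nbrs_def)
        have "nbrs E b - S' \<subseteq> (nbrs E b - S) - {?w}" using sub w(1) by auto
        hence "card (nbrs E b - S') \<le> card ((nbrs E b - S) - {?w})" by (rule card_mono[rotated]) (use nbrs_fin in auto)
        also have "\<dots> = card (nbrs E b - S) - 1" using wn by simp
        finally show ?thesis using True wn card_gt_0_iff[of "nbrs E b - S"] nbrs_fin[of b] by auto
      next
        case nA: False
        show ?thesis
        proof (cases "c a = b")
          case True
          let ?w = "adv hs c b"
          have w: "?w \<in> S'" "?w \<in> V - S" "c ?w = b" using served[OF bS aVS True] by auto
          have "E ?w b" using cn[OF w(2)] w(3) by (simp add: nbrs_def)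
          hence "?w \<in> nbrs E b - S" using w sym by (auto simp: nbrs_def)
          moreover have "?w \<noteq> a" using w(1) False by auto
          ultimately have Aev using w(3) unfolding Aev_def by blast
          with nA show ?thesis by simp
        next
          case False
          then show ?thesis using nA cm by simp
        qed
      qed
      thus ?thesis using PsiS PsiS' fm by simp
    qed
  qed
qed

end

context tsetup
begin

lemma round_adv: assumes va: "valid_adversary V r adv" and iv: "Inv hs"
  shows "(\<integral>\<^sup>+x. of_nat (Psi (current r (hs@[x]))) \<partial>rpull_adv_kernel V E r adv hs) + indicator {hs. Qd hs} hs
         \<le> of_nat (Psi (current r hs))"
proof (cases "u \<in> current r hs")
  case True
  have g: "good (current r hs)" using iv by (simp add: Inv_def)
  have "(\<integral>\<^sup>+x. of_nat (Psi (current r (hs@[x]))) \<partial>rpull_adv_kernel V E r adv hs) = (\<integral>\<^sup>+x. 0 \<partial>rpull_adv_kernel V E r adv hs)"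
  proof (rule nn_integral_cong_AE, rule AE_pmfI)
    fix x assume x: "x \<in> set_pmf (rpull_adv_kernel V E r adv hs)"
    have "current r hs \<subseteq> snd x" using kprop_adv[OF va] g x unfolding kprop_def by blast
    hence "u \<in> current r (hs@[x])" using True by (auto simp: current_snoc)
    thus "of_nat (Psi (current r (hs@[x]))) = (0::ennreal)" by (simp add: Psi_def)
  qed
  moreover have "\<not> Qd hs" using Qd_iff[OF iv] True by simp
  ultimately show ?thesis by simp
next
  case False
  let ?S = "current r hs"
  have g: "good ?S" using iv by (simp add: Inv_def)
  have Q: "Qd hs" using Qd_iff[OF iv] False by simp
  let ?a = "P!qi ?S" and ?b = "P!(qi ?S - 1)"
  note qp = q_props[OF g False]
  have aVS: "?a \<in> V - ?S" using qp P_V by auto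
  have b: "?b \<in> nbrs E ?a" using P_edge[of "qi ?S"] qp sym by (auto simp: nbrs_def)
  let ?Aev = "\<lambda>c. \<exists>v\<in>nbrs E ?b - ?S - {?a}. c v = ?b"
  let ?H = "\<lambda>c. indicator {c. ?Aev c} c + of_nat (deg E ?a) * indicator {c. \<not> ?Aev c \<and> c ?a = ?b} c :: ennreal"
  let ?S'' = "\<lambda>c. ?S \<union> adv hs c ` {v \<in> ?S. req_set V ?S c v \<noteq> {}}"
  have eq: "(\<integral>\<^sup>+x. of_nat (Psi (current r (hs@[x]))) \<partial>rpull_adv_kernel V E r adv hs)
          = (\<integral>\<^sup>+c. of_nat (Psi (?S'' c)) \<partial>requests V E ?S)"
    unfolding rpull_adv_kernel_def Let_def by (simp add: current_snoc)
  have H1: "(\<integral>\<^sup>+c. ?H c \<partial>requests V E ?S) = 1"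
  proof -
    have ins: "V - ?S = insert ?a ((V - ?S) - {?a})" using aVS by auto
    have "requests V E ?S = Pi_pmf (insert ?a ((V - ?S) - {?a})) undefined (\<lambda>w. pmf_of_set (nbrs E w))"
      unfolding requests_def using ins by simp
    moreover have "(\<integral>\<^sup>+c. ?H c \<partial>Pi_pmf (insert ?a ((V - ?S) - {?a})) undefined (\<lambda>w. pmf_of_set (nbrs E w))) = 1"
    proof (rule indep_H)
      show "finite (V - ?S - {?a})" using finV by simp
      show "?a \<notin> V - ?S - {?a}" by simp
      show "\<And>g y. ?Aev (g(?a := y)) = ?Aev g" by auto
      show "0 < deg E ?a" using deg_pos aVS by simp
      have "emeasure (measure_pmf (pmf_of_set (nbrs E ?a))) {?b} = ennreal (real (card (nbrs E ?a \<inter> {?b})) / real (card (nbrs E ?a)))"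
        using nbrs_ne[of ?a] nbrs_fin[of ?a] aVS by (simp add: emeasure_pmf_of_set)
      also have "nbrs E ?a \<inter> {?b} = {?b}" using b by auto
      finally show "emeasure (measure_pmf (pmf_of_set (nbrs E ?a))) {?b} = ennreal (1 / real (deg E ?a))"
        by (simp add: deg_def)
    qed
    ultimately show ?thesis by simp
  qed
  have pw: "of_nat (Psi (?S'' c)) + ?H c \<le> of_nat (Psi ?S)" if c: "c \<in> set_pmf (requests V E ?S)" for c
  proof -
    have "Psi (?S'' c) + (if ?Aev c then 1 else if c ?a = ?b then deg E ?a else 0) \<le> Psi ?S"
      using adv_pw[OF va g False c] by simp
    hence "(of_nat (Psi (?S'' c) + (if ?Aev c then 1 else if c ?a = ?b then deg E ?a else 0)) :: ennreal) \<le> of_nat (Psi ?S)"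
      by (simp only: of_nat_le_iff)
    thus ?thesis by (cases "?Aev c"; cases "c ?a = ?b") (auto simp: indicator_def)
  qed
  have "(\<integral>\<^sup>+x. of_nat (Psi (current r (hs@[x]))) \<partial>rpull_adv_kernel V E r adv hs) + 1
      = (\<integral>\<^sup>+c. of_nat (Psi (?S'' c)) \<partial>requests V E ?S) + (\<integral>\<^sup>+c. ?H c \<partial>requests V E ?S)"
    by (simp only: eq H1)
  also have "\<dots> = (\<integral>\<^sup>+c. of_nat (Psi (?S'' c)) + ?H c \<partial>requests V E ?S)"
    by (simp add: nn_integral_add)
  also have "\<dots> \<le> (\<integral>\<^sup>+c. of_nat (Psi ?S) \<partial>requests V E ?S)"
    by (rule nn_integral_mono_AE, rule AE_pmfI) (rule pw)
  also have "\<dots> = of_nat (Psi ?S)" by simp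
  finally show ?thesis using Q by simp
qed

lemma eit_Qd: "expected_inform_time r K u = (\<Sum>t. emeasure (traj K t) {hs. Qd hs})"
  unfolding eit_eq Qd_def ..

lemma lower_any: assumes kp: "kprop K" shows "of_nat M \<le> 2 * expected_inform_time r K u"
proof -
  have "(\<lambda>hs. of_nat (f (current r hs)) :: ennreal) [] \<le> 2 * (\<Sum>t. emeasure (traj K t) {hs. Qd hs})"
  proof (rule traj_lower2[where Inv=Inv and M=M])
    show "Inv []" by (rule Inv0)
    show "\<And>hs x. Inv hs \<Longrightarrow> x \<in> set_pmf (K hs) \<Longrightarrow> Inv (hs @ [x])" by (rule Inv_step[OF kp])
    show "\<And>hs. Inv hs \<Longrightarrow> of_nat (f (current r hs)) \<le> (\<integral>\<^sup>+x. of_nat (f (current r (hs@[x]))) \<partial>K hs) + indicator {hs. Qd hs} hs"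
      by (rule round_lower[OF kp])
    show "\<And>hs x. Inv hs \<Longrightarrow> x \<in> set_pmf (K hs) \<Longrightarrow> Qd (hs @ [x]) \<Longrightarrow> Qd hs" by (rule Qd_anti)
    fix hs assume iv: "Inv hs"
    show "(of_nat (f (current r hs)) :: ennreal) \<le> of_nat M * indicator {hs. Qd hs} hs"
    proof (cases "Qd hs")
      case True then show ?thesis using f_le_M by simp
    next
      case False
      hence "u \<in> current r hs" using Qd_iff[OF iv] by simp
      then show ?thesis using f_done iv False by (simp add: Inv_def)
    qed
  qed
  thus ?thesis by (simp add: current_nil f_r eit_Qd)
qed

lemma upper_pull: "expected_inform_time r (pull_kernel V E r) u \<le> of_nat M"
proof -
  have "(\<Sum>t. emeasure (traj (pull_kernel V E r) t) {hs. Qd hs}) \<le> (\<lambda>hs. of_nat (f (current r hs)) :: ennreal) []"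
  proof (rule traj_upper2[where Inv=Inv])
    show "Inv []" by (rule Inv0)
    show "\<And>hs x. Inv hs \<Longrightarrow> x \<in> set_pmf (pull_kernel V E r hs) \<Longrightarrow> Inv (hs @ [x])" by (rule Inv_step[OF kprop_pull])
    show "\<And>hs. Inv hs \<Longrightarrow> (\<integral>\<^sup>+x. of_nat (f (current r (hs@[x]))) \<partial>pull_kernel V E r hs) + indicator {hs. Qd hs} hs \<le> of_nat (f (current r hs))"
      by (rule round_upper_pull)
  qed
  thus ?thesis by (simp add: current_nil f_r eit_Qd)
qed

lemma upper_adv: assumes va: "valid_adversary V r adv"
  shows "expected_inform_time r (rpull_adv_kernel V E r adv) u \<le> of_nat (Psi {r})"
proof -
  have "(\<Sum>t. emeasure (traj (rpull_adv_kernel V E r adv) t) {hs. Qd hs}) \<le> (\<lambda>hs. of_nat (Psi (current r hs)) :: ennreal) []"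
  proof (rule traj_upper2[where Inv=Inv])
    show "Inv []" by (rule Inv0)
    show "\<And>hs x. Inv hs \<Longrightarrow> x \<in> set_pmf (rpull_adv_kernel V E r adv hs) \<Longrightarrow> Inv (hs @ [x])" by (rule Inv_step[OF kprop_adv[OF va]])
    show "\<And>hs. Inv hs \<Longrightarrow> (\<integral>\<^sup>+x. of_nat (Psi (current r (hs@[x]))) \<partial>rpull_adv_kernel V E r adv hs) + indicator {hs. Qd hs} hs \<le> of_nat (Psi (current r hs))"
      by (rule round_adv[OF va])
  qed
  thus ?thesis by (simp add: current_nil eit_Qd)
qed

lemma Psi_r: "Psi {r} \<le> deg E r + 2 * M"
proof -
  have ur': "u \<notin> {r}" using ur by simp
  have "P!(qi {r} - 1) = r" using q_props[OF good_r ur'] by simp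
  moreover have "card (nbrs E r - {r}) \<le> deg E r" unfolding deg_def by (rule card_mono[OF nbrs_fin]) auto
  ultimately show ?thesis using ur' f_r by (simp add: Psi_def)
qed

lemma pds: "path_degree_sum E r u = deg E r + M"
proof -
  have "path_nodes E r u = set P" by (simp add: path_nodes_def P_def)
  also have "set P = (\<lambda>i. P!i) ` {0..k}" using len_P by (auto simp: set_conv_nth)
  finally have pn: "path_nodes E r u = (\<lambda>i. P!i) ` {0..k}" .
  have inj: "inj_on (\<lambda>i. P!i) {0..k}" using P_inj by (auto simp: inj_on_def)
  have "path_degree_sum E r u = (\<Sum>i\<in>{0..k}. deg E (P!i))"
    unfolding path_degree_sum_def pn by (simp add: sum.reindex[OF inj])
  also have "{0..k} = insert 0 {1..k}" by auto
  also have "(\<Sum>i\<in>insert 0 {1..k}. deg E (P!i)) = deg E (P!0) + M" by (simp add: M_def)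
  finally show ?thesis using P0 by simp
qed

end

lemma half_le: assumes "(of_nat m :: ennreal) \<le> 2 * e" shows "ennreal (1/2 * real m) \<le> e"
proof -
  have eq1: "ennreal (1/2 * real m) = ennreal (1/2) * ennreal (real m)"
    by (rule ennreal_mult) auto
  have eq2: "ennreal (real m) = of_nat m" by (simp add: ennreal_of_nat_eq_real_of_nat)
  have "ennreal (1/2 * real m) = ennreal (1/2) * of_nat m" by (subst eq1, subst eq2, rule refl)
  also have "\<dots> \<le> ennreal (1/2) * (2 * e)" using assms by (rule mult_left_mono) simp
  also have "ennreal (1/2) * (2 * e) = (ennreal (1/2) * ennreal 2) * e" by (simp add: ac_simps)
  also have "ennreal (1/2) * ennreal 2 = ennreal (1/2 * 2)" by (rule ennreal_mult[symmetric]) auto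
  finally show ?thesis by simp
qed

theorem lemma1:
  shows "(\<exists>c C :: real. c > 0 \<and> C > 0 \<and>
           (\<forall>(V :: nat set) E r u. is_tree V E \<and> r \<in> V \<and> u \<in> V \<and> u \<noteq> r \<longrightarrow>
              ennreal (c * (real (path_degree_sum E r u) - real (deg E r)))
                \<le> expected_inform_time r (pull_kernel V E r) u
            \<and> expected_inform_time r (pull_kernel V E r) u
                \<le> ennreal (C * (real (path_degree_sum E r u) - real (deg E r)))))
       \<and> (\<exists>c :: real. c > 0 \<and>
           (\<forall>(V :: nat set) E r u. is_tree V E \<and> r \<in> V \<and> u \<in> V \<and> u \<noteq> r \<longrightarrow>
              ennreal (c * (real (path_degree_sum E r u) - real (deg E r)))
                \<le> expected_inform_time r (rpull_random_kernel V E r) u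
            \<and> (\<forall>adv. valid_adversary V r adv \<longrightarrow>
                ennreal (c * (real (path_degree_sum E r u) - real (deg E r)))
                  \<le> expected_inform_time r (rpull_adv_kernel V E r adv) u)))
       \<and> (\<exists>C :: real. C > 0 \<and>
           (\<forall>(V :: nat set) E r u adv. is_tree V E \<and> r \<in> V \<and> u \<in> V \<and> u \<noteq> r
                \<and> valid_adversary V r adv \<longrightarrow>
              expected_inform_time r (rpull_adv_kernel V E r adv) u
                \<le> ennreal (C * real (path_degree_sum E r u))))"
  proof (intro conjI)
  show "\<exists>c C :: real. c > 0 \<and> C > 0 \<and>
           (\<forall>(V :: nat set) E r u. is_tree V E \<and> r \<in> V \<and> u \<in> V \<and> u \<noteq> r \<longrightarrow>
              ennreal (c * (real (path_degree_sum E r u) - real (deg E r)))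
                \<le> expected_inform_time r (pull_kernel V E r) u
            \<and> expected_inform_time r (pull_kernel V E r) u
                \<le> ennreal (C * (real (path_degree_sum E r u) - real (deg E r))))"
  proof (rule exI[of _ "1/2"], rule exI[of _ 1], intro conjI allI impI)
    fix V :: "nat set" and E r u assume a: "is_tree V E \<and> r \<in> V \<and> u \<in> V \<and> u \<noteq> r"
    interpret tsetup V E r u using a by unfold_locales auto
    have e: "real (path_degree_sum E r u) - real (deg E r) = real M" using pds by simp
    show "ennreal (1/2 * (real (path_degree_sum E r u) - real (deg E r))) \<le> expected_inform_time r (pull_kernel V E r) u"
      unfolding e by (rule half_le[OF lower_any[OF kprop_pull]])
    show "expected_inform_time r (pull_kernel V E r) u \<le> ennreal (1 * (real (path_degree_sum E r u) - real (deg E r)))"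
      unfolding e using upper_pull by (simp add: ennreal_of_nat_eq_real_of_nat)
  qed simp_all
  show "\<exists>c :: real. c > 0 \<and>
           (\<forall>(V :: nat set) E r u. is_tree V E \<and> r \<in> V \<and> u \<in> V \<and> u \<noteq> r \<longrightarrow>
              ennreal (c * (real (path_degree_sum E r u) - real (deg E r)))
                \<le> expected_inform_time r (rpull_random_kernel V E r) u
            \<and> (\<forall>adv. valid_adversary V r adv \<longrightarrow>
                ennreal (c * (real (path_degree_sum E r u) - real (deg E r)))
                  \<le> expected_inform_time r (rpull_adv_kernel V E r adv) u))"
  proof (intro exI[of _ "1/2"] conjI allI impI)
    fix V :: "nat set" and E r u assume a: "is_tree V E \<and> r \<in> V \<and> u \<in> V \<and> u \<noteq> r"
    interpret tsetup V E r u using a by unfold_locales auto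
    have e: "real (path_degree_sum E r u) - real (deg E r) = real M" using pds by simp
    show "ennreal (1/2 * (real (path_degree_sum E r u) - real (deg E r))) \<le> expected_inform_time r (rpull_random_kernel V E r) u"
      unfolding e by (rule half_le[OF lower_any[OF kprop_rand]])
    fix adv :: "nat adversary" assume va: "valid_adversary V r adv"
    show "ennreal (1/2 * (real (path_degree_sum E r u) - real (deg E r))) \<le> expected_inform_time r (rpull_adv_kernel V E r adv) u"
      unfolding e by (rule half_le[OF lower_any[OF kprop_adv[OF va]]])
  qed simp
  show "\<exists>C :: real. C > 0 \<and>
           (\<forall>(V :: nat set) E r u adv. is_tree V E \<and> r \<in> V \<and> u \<in> V \<and> u \<noteq> r
                \<and> valid_adversary V r adv \<longrightarrow>
              expected_inform_time r (rpull_adv_kernel V E r adv) u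
                \<le> ennreal (C * real (path_degree_sum E r u)))"
  proof (intro exI[of _ 2] conjI allI impI)
    fix V :: "nat set" and E r u adv assume a: "is_tree V E \<and> r \<in> V \<and> u \<in> V \<and> u \<noteq> r \<and> valid_adversary V r adv"
    interpret tsetup V E r u using a by unfold_locales auto
    have p: "Psi {r} \<le> 2 * path_degree_sum E r u" using Psi_r pds by simp
    have "expected_inform_time r (rpull_adv_kernel V E r adv) u \<le> of_nat (Psi {r})"
      using upper_adv a by simp
    also have "(of_nat (Psi {r}) :: ennreal) \<le> of_nat (2 * path_degree_sum E r u)"
      using p by (simp only: of_nat_le_iff)
    also have "(of_nat (2 * path_degree_sum E r u) :: ennreal) = ennreal (2 * real (path_degree_sum E r u))"
      by (simp add: ennreal_of_nat_eq_real_of_nat)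
    finally show "expected_inform_time r (rpull_adv_kernel V E r adv) u \<le> ennreal (2 * real (path_degree_sum E r u))" .
  qed simp
qed

end
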